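(* Let $\mathcal{V}$ be a finite vocabulary, let $\mathbf{x}$ be a prompt, and consider responses (trajectories) $\tau=[y_1,\dots,y_T]\in\mathcal{V}^T$ of length $T$. Let $r(\mathbf{x},\tau)$ be a target reward, let $\pi_{\mathrm{SFT}}$ be a reference token-level policy with induced trajectory distribution $\rho_{\mathrm{SFT}}$, and let $\beta>0$ and $\alpha>0$. Let $\rho_{\mathrm{BL}}$ be the baseline trajectory-level policy aligned with the target reward, $$\rho_{\mathrm{BL}}(\cdot\mid \mathbf{x})=\arg\max_{\rho}\ \mathbb{E}_{\tau\sim\rho(\cdot\mid\mathbf{x})}[r(\mathbf{x},\tau)]-\beta\,\mathbb{D}_{\mathrm{KL}}\big[\rho(\cdot\mid\mathbf{x})\,\|\,\rho_{\mathrm{SFT}}(\cdot\mid\mathbf{x})\big],$$ i.e. $\rho_{\mathrm{BL}}(\tau\mid\mathbf{x})=\frac{1}{Z(\mathbf{x})}\rho_{\mathrm{SFT}}(\tau\mid\mathbf{x})\exp(r(\mathbf{x},\tau)/\beta)$, and let $\pi_{\mathrm{BL}}$ be the token-level policy inducing $\rho_{\mathrm{BL}}$. For a state $\mathbf{s}_t=[\mathbf{x},\mathbf{y}_{<t}]$ and token $z$, define $$\mathrm{TQ}^\star(\mathbf{s}_t,z)=\mathbb{E}_{\tau\sim\rho_{\mathrm{BL}}(\cdot\mid \mathbf{s}_t,z)}\big[r([\mathbf{s}_t,z],\tau)\big],$$ and define the decoding policy $$\pi_{\mathrm{alg}}(\cdot\mid\mathbf{s}_t)=\arg\max_{\pi}\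 \mathbb{E}_{z\sim\pi(\cdot\mid\mathbf{s}_t)}[\mathrm{TQ}^\star(\mathbf{s}_t,z)]-\alpha\,\mathbb{D}_{\mathrm{KL}}\big[\pi(\cdot\mid\mathbf{s}_t)\,\|\,\pi_{\mathrm{BL}}(\cdot\mid\mathbf{s}_t)\big],$$ equivalently $\pi_{\mathrm{alg}}(z\mid\mathbf{s}_t)\propto \pi_{\mathrm{BL}}(z\mid\mathbf{s}_t)\exp(\mathrm{TQ}^\star(\mathbf{s}_t,z)/\alpha)$, with induced trajectory distribution $\rho_{\mathrm{alg}}$. Let $V^*(\mathbf{x})=\max_{\rho}\mathbb{E}_{\tau\sim\rho(\cdot\mid\mathbf{x})}[r(\mathbf{x},\tau)]$ with maximizer $\rho^*$, let $V^{\mathrm{alg}}(\mathbf{x})=\mathbb{E}_{\tau\sim\rho_{\mathrm{alg}}(\cdot\mid\mathbf{x})}[r(\mathbf{x},\tau)]$, and let $\texttt{Sub-Gap}(\mathbf{x})=V^*(\mathbf{x})-V^{\mathrm{alg}}(\mathbf{x})$. Then: (1) For all $\mathbf{x}$, $$\texttt{Sub-Gap}(\mathbf{x})\le \beta\,\mathbb{D}_{\mathrm{KL}}\big(\rho^*(\cdot\mid\mathbf{x})\,\|\,\rho_{\mathrm{SFT}}(\cdot\mid\mathbf{x})\big)-\alpha\, h_\alpha(\mathbf{x}),$$ where $h_\alpha(\mathbf{x})=\sum_{t=1}^{T-1}\mathbb{E}_{\mathbf{y}_{<t}\sim\rho_{\mathrm{alg}}(\cdot\mid\mathbf{x})}\Big[\mathbb{D}_{\mathrm{KL}}\big(\pi_{\mathrm{alg}}(\cdot\mid[\mathbf{x},\mathbf{y}_{<t}])\,\|\,\pi_{\mathrm{BL}}(\cdot\mid[\mathbf{x},\mathbf{y}_{<t}])\big)\Big]\ge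 0$ (with $\mathbf{y}_{<1}$ the empty prefix). (2) If moreover $0\le r\le R_{\max}$, then $$\mathbb{D}_{\mathrm{KL}}\big(\rho_{\mathrm{alg}}(\cdot\mid\mathbf{x})\,\|\,\rho_{\mathrm{SFT}}(\cdot\mid\mathbf{x})\big)\le\Big(\frac{1}{\beta}+\frac{T}{\alpha}\Big)R_{\max}.$$
   Context: Language generation is modeled as a token-level MDP: a state $\mathbf{s}_t=[\mathbf{x},\mathbf{y}_{<t}]$ is the prompt concatenated with the tokens generated so far, an action is the next token $z\in\mathcal{V}$, and transitions are deterministic concatenation. A token-level policy $\pi(\cdot\mid\mathbf{s}_t)$ induces a trajectory-level distribution $\rho_\pi(\mathbf{y}\mid\mathbf{x})=\prod_{t}\pi(y_t\mid[\mathbf{x},\mathbf{y}_{<t}])$; conditional trajectory distributions such as $\rho(\cdot\mid\mathbf{s}_t,z)$ denote the distribution of the completion $\tau$ given the prefix $[\mathbf{s}_t,z]$, and $r([\mathbf{s}_t,z],\tau)$ is the reward of the full response obtained by concatenation. $Z(\mathbf{x})$ is the normalizing constant. This is the "direct transfer" setting, in which the baseline aligned model is aligned with the same target reward $r$. *)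

theory Defs
  imports Complex_Main "HOL-Library.Extended_Real"
begin

(* Token-level policies: pol x prefix z = probability of next token z given state [x, prefix]. *)

definition trajs :: "nat \<Rightarrow> 'v list set" where
  "trajs n = {ys. length ys = n}"

definition valid_policy :: "nat \<Rightarrow> ('p \<Rightarrow> 'v::finite list \<Rightarrow> 'v \<Rightarrow> real) \<Rightarrow> 'p \<Rightarrow> bool" where
  "valid_policy T pol x \<longleftrightarrow>
     (\<forall>p. length p < T \<longrightarrow> (\<forall>z. 0 \<le> pol x p z) \<and> (\<Sum>z\<in>UNIV. pol x p z) = 1)"

definition cond_rho :: "('p \<Rightarrow> 'v list \<Rightarrow> 'v \<Rightarrow> real) \<Rightarrow> 'p \<Rightarrow> 'v list \<Rightarrow> 'v list \<Rightarrow> real" where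
  "cond_rho pol x p tau = (\<Prod>i<length tau. pol x (p @ take i tau) (tau ! i))"

definition rho :: "('p \<Rightarrow> 'v list \<Rightarrow> 'v \<Rightarrow> real) \<Rightarrow> 'p \<Rightarrow> 'v list \<Rightarrow> real" where
  "rho pol x tau = cond_rho pol x [] tau"

definition traj_dist :: "nat \<Rightarrow> ('v list \<Rightarrow> real) \<Rightarrow> bool" where
  "traj_dist T q \<longleftrightarrow> (\<forall>tau\<in>trajs T. 0 \<le> q tau) \<and> sum q (trajs T) = 1"

definition expect :: "nat \<Rightarrow> ('v list \<Rightarrow> real) \<Rightarrow> ('v list \<Rightarrow> real) \<Rightarrow> real" where
  "expect T q f = (\<Sum>tau\<in>trajs T. q tau * f tau)"

definition KL :: "'a set \<Rightarrow> ('a \<Rightarrow> real) \<Rightarrow> ('a \<Rightarrow> real) \<Rightarrow> ereal" where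
  "KL A p q = (if \<exists>a\<in>A. p a \<noteq> 0 \<and> q a = 0 then \<infinity>
               else ereal (\<Sum>a\<in>A. if p a = 0 then 0 else p a * ln (p a / q a)))"

definition Z_BL :: "nat \<Rightarrow> ('p \<Rightarrow> 'v list \<Rightarrow> 'v \<Rightarrow> real) \<Rightarrow> ('p \<Rightarrow> 'v list \<Rightarrow> real) \<Rightarrow> real \<Rightarrow> 'p \<Rightarrow> real" where
  "Z_BL T pi_sft r \<beta> x = (\<Sum>tau\<in>trajs T. rho pi_sft x tau * exp (r x tau / \<beta>))"

definition rho_BL :: "nat \<Rightarrow> ('p \<Rightarrow> 'v list \<Rightarrow> 'v \<Rightarrow> real) \<Rightarrow> ('p \<Rightarrow> 'v list \<Rightarrow> real) \<Rightarrow> real \<Rightarrow> 'p \<Rightarrow> 'v list \<Rightarrow> real" where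
  "rho_BL T pi_sft r \<beta> x tau = rho pi_sft x tau * exp (r x tau / \<beta>) / Z_BL T pi_sft r \<beta> x"

definition TQ :: "nat \<Rightarrow> ('p \<Rightarrow> 'v list \<Rightarrow> 'v \<Rightarrow> real) \<Rightarrow> ('p \<Rightarrow> 'v list \<Rightarrow> real) \<Rightarrow> 'p \<Rightarrow> 'v list \<Rightarrow> 'v \<Rightarrow> real" where
  "TQ T pi_bl r x p z =
     (\<Sum>tau\<in>trajs (T - length p - 1). cond_rho pi_bl x (p @ [z]) tau * r x (p @ z # tau))"

definition pi_alg :: "nat \<Rightarrow> ('p \<Rightarrow> 'v::finite list \<Rightarrow> 'v \<Rightarrow> real) \<Rightarrow> ('p \<Rightarrow> 'v list \<Rightarrow> real) \<Rightarrow> real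
                      \<Rightarrow> 'p \<Rightarrow> 'v list \<Rightarrow> 'v \<Rightarrow> real" where
  "pi_alg T pi_bl r \<alpha> x p z =
     pi_bl x p z * exp (TQ T pi_bl r x p z / \<alpha>) /
     (\<Sum>z'\<in>UNIV. pi_bl x p z' * exp (TQ T pi_bl r x p z' / \<alpha>))"

definition h_alpha :: "nat \<Rightarrow> ('p \<Rightarrow> 'v::finite list \<Rightarrow> 'v \<Rightarrow> real) \<Rightarrow> ('p \<Rightarrow> 'v list \<Rightarrow> real) \<Rightarrow> real \<Rightarrow> 'p \<Rightarrow> ereal" where
  "h_alpha T pi_bl r \<alpha> x =
     (\<Sum>t\<in>{1..T-1}. \<Sum>p\<in>trajs (t - 1).
        ereal (rho (pi_alg T pi_bl r \<alpha>) x p) * KL UNIV (pi_alg T pi_bl r \<alpha> x p) (pi_bl x p))"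

end

theory Submission imports Defs begin

lemma finite_trajs[simp]: "finite (trajs n :: 'v::finite list set)"
proof -
  have "{ys::'v list. length ys = n} = {ys. set ys \<subseteq> UNIV \<and> length ys = n}" by auto
  then show ?thesis unfolding trajs_def using finite_lists_length_eq[OF finite_UNIV, of n] by simp
qed

lemma trajs_0[simp]: "trajs 0 = {[]}"
  by (auto simp: trajs_def)

lemma sum_trajs_Suc:
  "(\<Sum>\<tau>\<in>trajs (Suc n). f \<tau>) = (\<Sum>z\<in>(UNIV::'v::finite set). \<Sum>q\<in>trajs n. f (z#q))"
proof -
  have e: "trajs (Suc n) = (\<lambda>(z,q). z#q) ` (UNIV \<times> (trajs n :: 'v list set))"
    by (auto simp: trajs_def length_Suc_conv image_iff)
  have i: "inj_on (\<lambda>(z,q). z#q) (UNIV \<times> (trajs n :: 'v list set))"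
    by (auto simp: inj_on_def)
  show ?thesis
    unfolding e sum.reindex[OF i] by (simp add: sum.cartesian_product split_beta comp_def)
qed

lemma sum_trajs_snoc:
  "(\<Sum>\<tau>\<in>trajs (Suc n). f \<tau>) = (\<Sum>q\<in>trajs n. \<Sum>z\<in>(UNIV::'v::finite set). f (q@[z]))"
proof -
  have e: "trajs (Suc n) = (\<lambda>(q,z). q@[z]) ` ((trajs n :: 'v list set) \<times> UNIV)"
  proof (auto simp: trajs_def image_iff)
    fix xa :: "'v list" assume "length xa = Suc n"
    then show "\<exists>a. length a = n \<and> (\<exists>b. xa = a @ [b])"
      by (metis append_butlast_last_id length_butlast diff_Suc_1 list.size(3) nat.distinct(1))
  qed
  have i: "inj_on (\<lambda>(q,z). q@[z]) ((trajs n :: 'v list set) \<times> UNIV)"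
    by (auto simp: inj_on_def)
  show ?thesis
    unfolding e sum.reindex[OF i] by (simp add: sum.cartesian_product split_beta comp_def)
qed

lemma cond_rho_Nil[simp]: "cond_rho pol x p [] = 1"
  by (simp add: cond_rho_def)

lemma cond_rho_Cons:
  "cond_rho pol x p (z#q) = pol x p z * cond_rho pol x (p@[z]) q"
  unfolding cond_rho_def by (simp add: prod.lessThan_Suc_shift del: prod.lessThan_Suc)

lemma cond_rho_snoc:
  "cond_rho pol x p (q@[z]) = cond_rho pol x p q * pol x (p@q) z"
  unfolding cond_rho_def
  by (auto simp: nth_append intro!: prod.cong)

lemma cond_rho_sum:
  assumes v: "valid_policy T pol x"
  shows "length p + n \<le> T \<Longrightarrow> (\<Sum>q\<in>trajs n. cond_rho pol x p q) = (1::real)"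
proof (induction n arbitrary: p)
  case 0 then show ?case by simp
next
  case (Suc n)
  have "(\<Sum>q\<in>trajs (Suc n). cond_rho pol x p q)
      = (\<Sum>z\<in>UNIV. pol x p z * (\<Sum>q\<in>trajs n. cond_rho pol x (p@[z]) q))"
    by (simp add: sum_trajs_Suc cond_rho_Cons sum_distrib_left)
  also have "\<dots> = (\<Sum>z\<in>UNIV. pol x p z)"
    using Suc.prems by (simp add: Suc.IH)
  also have "\<dots> = 1" using v Suc.prems by (simp add: valid_policy_def)
  finally show ?case .
qed

lemma cond_rho_nonneg:
  assumes v: "valid_policy T pol x" and "length p + length q \<le> T"
  shows "0 \<le> cond_rho pol x p q"
  unfolding cond_rho_def
  using assms by (auto simp: valid_policy_def intro!: prod_nonneg)

lemma dv_term:
  fixes p q c :: real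
  assumes "0 \<le> p" "0 \<le> q" "p \<noteq> 0 \<Longrightarrow> q \<noteq> 0"
  shows "p*c + p - q*exp c \<le> (if p = 0 then 0 else p * ln (p/q))"
proof (cases "p = 0")
  case True then show ?thesis using assms by simp
next
  case False
  then have pp: "p > 0" and qp: "q > 0" using assms by auto
  have "1 + (c - ln (p/q)) \<le> exp (c - ln (p/q))" by (rule exp_ge_add_one_self)
  also have "exp (c - ln (p/q)) = q * exp c / p"
    using pp qp by (simp add: exp_diff)
  finally have "p * (1 + (c - ln (p/q))) \<le> q * exp c"
    using pp by (simp add: field_simps)
  then show ?thesis using False by (simp add: algebra_simps)
qed

lemma dv_sum:
  fixes p q c :: "'a \<Rightarrow> real"
  assumes "\<And>a. a \<in> A \<Longrightarrow> 0 \<le> p a" "\<And>a. a \<in> A \<Longrightarrow> 0 \<le> q a"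
    "\<And>a. a \<in> A \<Longrightarrow> p a \<noteq> 0 \<Longrightarrow> q a \<noteq> 0"
  shows "(\<Sum>a\<in>A. p a * c a + p a - q a * exp (c a)) \<le> (\<Sum>a\<in>A. if p a = 0 then 0 else p a * ln (p a / q a))"
  by (rule sum_mono) (rule dv_term; use assms in auto)

definition NN :: "nat \<Rightarrow> ('p \<Rightarrow> 'v list \<Rightarrow> 'v \<Rightarrow> real) \<Rightarrow> ('p \<Rightarrow> 'v list \<Rightarrow> real) \<Rightarrow> real \<Rightarrow> 'p \<Rightarrow> 'v list \<Rightarrow> real" where
  "NN T bl r \<alpha> x p = (\<Sum>z\<in>UNIV. bl x p z * exp (TQ T bl r x p z / \<alpha>))"

lemma pi_alg_NN: "pi_alg T bl r \<alpha> x p z = bl x p z * exp (TQ T bl r x p z / \<alpha>) / NN T bl r \<alpha> x p"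
  by (simp add: pi_alg_def NN_def)

lemma NN_pos:
  fixes bl :: "'p \<Rightarrow> 'v::finite list \<Rightarrow> 'v \<Rightarrow> real"
  assumes v: "valid_policy T bl x" and l: "length p < T"
  shows "0 < NN T bl r \<alpha> x p"
proof -
  have nn: "\<And>z. 0 \<le> bl x p z" and s: "(\<Sum>z\<in>UNIV. bl x p z) = 1"
    using v l by (auto simp: valid_policy_def)
  obtain z where "bl x p z \<noteq> 0"
    using s by (metis (no_types, lifting) sum.neutral zero_neq_one)
  then have "0 < bl x p z * exp (TQ T bl r x p z / \<alpha>)" using nn[of z] by simp
  then show ?thesis unfolding NN_def
    by (rule sum_pos2[OF finite_UNIV UNIV_I]) (simp add: nn)
qed

lemma alg_nonneg:
  fixes bl :: "'p \<Rightarrow> 'v::finite list \<Rightarrow> 'v \<Rightarrow> real"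
  assumes v: "valid_policy T bl x" and l: "length p < T"
  shows "0 \<le> pi_alg T bl r \<alpha> x p z"
  using NN_pos[OF v l, of r \<alpha>] v l unfolding pi_alg_NN by (simp add: valid_policy_def)

lemma alg_sum:
  fixes bl :: "'p \<Rightarrow> 'v::finite list \<Rightarrow> 'v \<Rightarrow> real"
  assumes v: "valid_policy T bl x" and l: "length p < T"
  shows "(\<Sum>z\<in>UNIV. pi_alg T bl r \<alpha> x p z) = 1"
  using NN_pos[OF v l, of r \<alpha>] unfolding pi_alg_NN sum_divide_distrib[symmetric]
  by (simp add: NN_def)

lemma alg_valid:
  fixes bl :: "'p \<Rightarrow> 'v::finite list \<Rightarrow> 'v \<Rightarrow> real"
  assumes v: "valid_policy T bl x"
  shows "valid_policy T (pi_alg T bl r \<alpha>) x"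
  using alg_nonneg[OF v] alg_sum[OF v] by (simp add: valid_policy_def)

definition kl where
  "kl T bl r \<alpha> x p = (\<Sum>z\<in>UNIV. if pi_alg T bl r \<alpha> x p z = 0 then 0
     else pi_alg T bl r \<alpha> x p z * ln (pi_alg T bl r \<alpha> x p z / bl x p z))"

lemma KL_alg:
  "KL UNIV (pi_alg T bl r \<alpha> x p) (bl x p) = ereal (kl T bl r \<alpha> x p)"
  unfolding KL_def kl_def by (auto simp: pi_alg_NN)

lemma kl_nonneg:
  fixes bl :: "'p \<Rightarrow> 'v::finite list \<Rightarrow> 'v \<Rightarrow> real"
  assumes v: "valid_policy T bl x" and l: "length p < T"
  shows "0 \<le> kl T bl r \<alpha> x p"
proof -
  have "(\<Sum>z\<in>UNIV. pi_alg T bl r \<alpha> x p z * 0 + pi_alg T bl r \<alpha> x p z - bl x p z * exp 0) \<le> kl T bl r \<alpha> x p"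
    unfolding kl_def
    by (rule dv_sum) (use alg_nonneg[OF v l] v l in \<open>auto simp: valid_policy_def pi_alg_NN\<close>)
  moreover have "(\<Sum>z\<in>UNIV. pi_alg T bl r \<alpha> x p z * 0 + pi_alg T bl r \<alpha> x p z - bl x p z * exp 0) = 0"
    using alg_sum[OF v l] v l by (simp add: sum_subtractf valid_policy_def)
  ultimately show ?thesis by simp
qed

lemma kl_bound:
  fixes bl :: "'p \<Rightarrow> 'v::finite list \<Rightarrow> 'v \<Rightarrow> real"
  assumes v: "valid_policy T bl x" and l: "length p < T" and a: "\<alpha> > 0"
  shows "\<alpha> * kl T bl r \<alpha> x p \<le> (\<Sum>z\<in>UNIV. pi_alg T bl r \<alpha> x p z * TQ T bl r x p z)
            - (\<Sum>z\<in>UNIV. bl x p z * TQ T bl r x p z)"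
proof -
  let ?a = "pi_alg T bl r \<alpha> x p" and ?Q = "TQ T bl r x p" and ?N = "NN T bl r \<alpha> x p"
  have Np: "0 < ?N" by (rule NN_pos[OF v l])
  have nn: "\<And>z. 0 \<le> bl x p z" and s: "(\<Sum>z\<in>UNIV. bl x p z) = 1"
    using v l by (auto simp: valid_policy_def)
  have "kl T bl r \<alpha> x p = (\<Sum>z\<in>UNIV. ?a z * (?Q z / \<alpha> - ln ?N))"
    unfolding kl_def
  proof (rule sum.cong[OF refl])
    fix z
    show "(if ?a z = 0 then 0 else ?a z * ln (?a z / bl x p z)) = ?a z * (?Q z / \<alpha> - ln ?N)"
    proof (cases "?a z = 0")
      case False
      then have "bl x p z \<noteq> 0" by (simp add: pi_alg_NN)
      then have "?a z / bl x p z = exp (?Q z / \<alpha>) / ?N" by (simp add: pi_alg_NN)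
      then show ?thesis using False Np by (simp add: ln_div)
    qed simp
  qed
  also have "\<dots> = (\<Sum>z\<in>UNIV. ?a z * ?Q z) / \<alpha> - ln ?N"
    using alg_sum[OF v l, of r \<alpha>]
    by (simp add: algebra_simps sum_subtractf sum_divide_distrib sum_distrib_right[symmetric])
  finally have k: "kl T bl r \<alpha> x p = (\<Sum>z\<in>UNIV. ?a z * ?Q z) / \<alpha> - ln ?N" .
  define m where "m = (\<Sum>z\<in>UNIV. bl x p z * ?Q z) / \<alpha>"
  have e0: "(\<Sum>z\<in>UNIV. bl x p z * (1 + (?Q z / \<alpha> - m)))
      = (\<Sum>z\<in>UNIV. bl x p z) + (\<Sum>z\<in>UNIV. bl x p z * ?Q z) / \<alpha> - m * (\<Sum>z\<in>UNIV. bl x p z)"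
    by (simp add: algebra_simps sum.distrib sum_subtractf sum_divide_distrib sum_distrib_left)
  have e1: "(\<Sum>z\<in>UNIV. bl x p z * (1 + (?Q z / \<alpha> - m))) = 1"
    unfolding e0 s m_def[symmetric] by simp
  have "exp m = exp m * (\<Sum>z\<in>UNIV. bl x p z * (1 + (?Q z / \<alpha> - m)))"
    unfolding e1 by simp
  also have "\<dots> = (\<Sum>z\<in>UNIV. bl x p z * exp m * (1 + (?Q z / \<alpha> - m)))"
    by (simp add: sum_distrib_left mult_ac)
  also have "\<dots> \<le> (\<Sum>z\<in>UNIV. bl x p z * exp m * exp (?Q z / \<alpha> - m))"
    by (rule sum_mono) (rule mult_left_mono, rule exp_ge_add_one_self, simp add: nn)
  also have "\<dots> = ?N" unfolding NN_def by (simp add: exp_diff)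
  finally have "m \<le> ln ?N" using Np by (simp add: ln_ge_iff)
  then show ?thesis using k a unfolding m_def by (simp add: field_simps)
qed

definition WW where
  "WW T bl r x p = (\<Sum>q\<in>trajs (T - length p). cond_rho bl x p q * r x (p @ q))"

lemma WW_step:
  fixes bl :: "'p \<Rightarrow> 'v::finite list \<Rightarrow> 'v \<Rightarrow> real"
  assumes l: "length p < T"
  shows "WW T bl r x p = (\<Sum>z\<in>UNIV. bl x p z * TQ T bl r x p z)"
proof -
  obtain k where e: "T - length p = Suc k" using l by (metis Suc_diff_Suc)
  then have e2: "T - length p - 1 = k" by simp
  show ?thesis
    unfolding WW_def TQ_def e e2 sum_trajs_Suc
    by (simp add: cond_rho_Cons sum_distrib_left mult_ac)
qed

lemma WW_TQ: "WW T bl r x (p @ [z]) = TQ T bl r x p z"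
  by (simp add: WW_def TQ_def)

lemma WW_end: "length p = T \<Longrightarrow> WW T bl r x p = r x p"
  by (simp add: WW_def)

definition AA where
  "AA T bl r \<alpha> x t = (\<Sum>p\<in>trajs t. rho (pi_alg T bl r \<alpha>) x p * WW T bl r x p)"

lemma AA_step:
  fixes bl :: "'p \<Rightarrow> 'v::finite list \<Rightarrow> 'v \<Rightarrow> real"
  assumes v: "valid_policy T bl x" and t: "t < T" and a: "\<alpha> > 0"
  shows "\<alpha> * (\<Sum>p\<in>trajs t. rho (pi_alg T bl r \<alpha>) x p * kl T bl r \<alpha> x p)
     \<le> AA T bl r \<alpha> x (Suc t) - AA T bl r \<alpha> x t"
proof -
  let ?ra = "rho (pi_alg T bl r \<alpha>) x" and ?a = "pi_alg T bl r \<alpha> x"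
  have s1: "AA T bl r \<alpha> x (Suc t) = (\<Sum>p\<in>trajs t. ?ra p * (\<Sum>z\<in>UNIV. ?a p z * TQ T bl r x p z))"
    unfolding AA_def sum_trajs_snoc
    by (simp add: rho_def cond_rho_snoc WW_TQ sum_distrib_left mult_ac)
  have s0: "AA T bl r \<alpha> x t = (\<Sum>p\<in>trajs t. ?ra p * (\<Sum>z\<in>UNIV. bl x p z * TQ T bl r x p z))"
    unfolding AA_def using t by (intro sum.cong) (auto simp: trajs_def WW_step)
  have "\<alpha> * (\<Sum>p\<in>trajs t. ?ra p * kl T bl r \<alpha> x p) = (\<Sum>p\<in>trajs t. ?ra p * (\<alpha> * kl T bl r \<alpha> x p))"
    by (simp add: sum_distrib_left mult_ac)
  also have "\<dots> \<le> (\<Sum>p\<in>trajs t. ?ra p * ((\<Sum>z\<in>UNIV. ?a p z * TQ T bl r x p z) - (\<Sum>z\<in>UNIV. bl x p z * TQ T bl r x p z)))"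
  proof (rule sum_mono, rule mult_left_mono)
    fix p :: "'v list" assume p: "p \<in> trajs t"
    then have lp: "length p < T" using t by (simp add: trajs_def)
    show "\<alpha> * kl T bl r \<alpha> x p \<le> (\<Sum>z\<in>UNIV. ?a p z * TQ T bl r x p z) - (\<Sum>z\<in>UNIV. bl x p z * TQ T bl r x p z)"
      by (rule kl_bound[OF v lp a])
    show "0 \<le> ?ra p" unfolding rho_def
      by (rule cond_rho_nonneg[OF alg_valid[OF v]]) (use lp in simp)
  qed
  also have "\<dots> = AA T bl r \<alpha> x (Suc t) - AA T bl r \<alpha> x t"
    unfolding s0 s1 by (simp add: right_diff_distrib sum_subtractf)
  finally show ?thesis .
qed

lemma AA_tele:
  fixes bl :: "'p \<Rightarrow> 'v::finite list \<Rightarrow> 'v \<Rightarrow> real"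
  assumes v: "valid_policy T bl x" and a: "\<alpha> > 0"
  shows "n \<le> T \<Longrightarrow> \<alpha> * (\<Sum>t<n. \<Sum>p\<in>trajs t. rho (pi_alg T bl r \<alpha>) x p * kl T bl r \<alpha> x p)
     \<le> AA T bl r \<alpha> x n - AA T bl r \<alpha> x 0"
proof (induction n)
  case 0 then show ?case by simp
next
  case (Suc n)
  then have "n < T" by simp
  from AA_step[OF v this a, of r] Suc.IH Suc.prems show ?case
    by (simp add: distrib_left)
qed

lemma AA_0: "AA T bl r \<alpha> x 0 = expect T (rho bl x) (r x)"
  by (simp add: AA_def WW_def expect_def rho_def)

lemma AA_T: "AA T bl r \<alpha> x T = expect T (rho (pi_alg T bl r \<alpha>) x) (r x)"
  unfolding AA_def expect_def by (intro sum.cong) (auto simp: trajs_def WW_end)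

lemma Z_pos:
  fixes sft :: "'p \<Rightarrow> 'v::finite list \<Rightarrow> 'v \<Rightarrow> real"
  assumes v: "valid_policy T sft x"
  shows "0 < Z_BL T sft r \<beta> x"
proof -
  have s: "(\<Sum>q\<in>trajs T. rho sft x q) = 1" unfolding rho_def
    by (rule cond_rho_sum[OF v]) simp
  have nn: "\<And>q. q \<in> trajs T \<Longrightarrow> 0 \<le> rho sft x q" unfolding rho_def
    by (rule cond_rho_nonneg[OF v]) (simp add: trajs_def)
  obtain q where q: "q \<in> trajs T" "rho sft x q \<noteq> 0"
    using s by (metis (no_types, lifting) sum.neutral zero_neq_one)
  have "0 < rho sft x q * exp (r x q / \<beta>)" using q nn[of q] by simp
  then show ?thesis unfolding Z_BL_def
    by (rule sum_pos2[OF finite_trajs q(1)]) (simp add: nn)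
qed

lemma BL_facts:
  fixes sft :: "'p \<Rightarrow> 'v::finite list \<Rightarrow> 'v \<Rightarrow> real"
  assumes v: "valid_policy T sft x"
  shows "\<forall>q\<in>trajs T. 0 \<le> rho_BL T sft r \<beta> x q" "(\<Sum>q\<in>trajs T. rho_BL T sft r \<beta> x q) = 1"
proof -
  have nn: "\<And>q. q \<in> trajs T \<Longrightarrow> 0 \<le> rho sft x q" unfolding rho_def
    by (rule cond_rho_nonneg[OF v]) (simp add: trajs_def)
  show "\<forall>q\<in>trajs T. 0 \<le> rho_BL T sft r \<beta> x q"
    using nn Z_pos[OF v, of r \<beta>] by (simp add: rho_BL_def)
  show "(\<Sum>q\<in>trajs T. rho_BL T sft r \<beta> x q) = 1"
    using Z_pos[OF v, of r \<beta>] unfolding rho_BL_def sum_divide_distrib[symmetric]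
    by (simp add: Z_BL_def)
qed

lemma star_bound:
  fixes sft :: "'p \<Rightarrow> 'v::finite list \<Rightarrow> 'v \<Rightarrow> real"
  assumes v: "valid_policy T sft x" and b: "\<beta> > 0"
    and sd: "traj_dist T rs"
    and ac: "\<And>q. q \<in> trajs T \<Longrightarrow> rs q \<noteq> 0 \<Longrightarrow> rho sft x q \<noteq> 0"
  shows "expect T rs (r x) - expect T (rho_BL T sft r \<beta> x) (r x)
     \<le> \<beta> * (\<Sum>q\<in>trajs T. if rs q = 0 then 0 else rs q * ln (rs q / rho sft x q))"
proof -
  let ?Z = "Z_BL T sft r \<beta> x" and ?B = "rho_BL T sft r \<beta> x" and ?s = "rho sft x"
  have Zp: "0 < ?Z" by (rule Z_pos[OF v])
  have nn: "\<And>q. q \<in> trajs T \<Longrightarrow> 0 \<le> ?s q" unfolding rho_def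
    by (rule cond_rho_nonneg[OF v]) (simp add: trajs_def)
  have rs_nn: "\<And>q. q \<in> trajs T \<Longrightarrow> 0 \<le> rs q" and rs1: "sum rs (trajs T) = 1"
    using sd by (auto simp: traj_dist_def)
  note Bf = BL_facts[OF v, of r \<beta>]
  have "(\<Sum>q\<in>trajs T. rs q * (r x q / \<beta> - ln ?Z) + rs q - ?s q * exp (r x q / \<beta> - ln ?Z))
      \<le> (\<Sum>q\<in>trajs T. if rs q = 0 then 0 else rs q * ln (rs q / ?s q))"
    by (rule dv_sum) (use rs_nn nn ac in auto)
  moreover have "(\<Sum>q\<in>trajs T. ?s q * exp (r x q / \<beta> - ln ?Z)) = 1"
    using Bf(2) Zp by (simp add: exp_diff rho_BL_def)
  moreover have "(\<Sum>q\<in>trajs T. rs q * (r x q / \<beta> - ln ?Z) + rs q - ?s q * exp (r x q / \<beta> - ln ?Z))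
     = (\<Sum>q\<in>trajs T. rs q * r x q) / \<beta> - ln ?Z * (\<Sum>q\<in>trajs T. rs q) + (\<Sum>q\<in>trajs T. rs q)
       - (\<Sum>q\<in>trajs T. ?s q * exp (r x q / \<beta> - ln ?Z))"
    by (simp add: sum.distrib sum_subtractf right_diff_distrib sum_divide_distrib sum_distrib_left sum_distrib_right mult_ac)
  ultimately have st: "expect T rs (r x) / \<beta> - ln ?Z
      \<le> (\<Sum>q\<in>trajs T. if rs q = 0 then 0 else rs q * ln (rs q / ?s q))"
    using rs1 by (simp add: expect_def)
  have "(\<Sum>q\<in>trajs T. ?B q * 0 + ?B q - ?s q * exp 0)
      \<le> (\<Sum>q\<in>trajs T. if ?B q = 0 then 0 else ?B q * ln (?B q / ?s q))"
    by (rule dv_sum) (use Bf(1) nn in \<open>auto simp: rho_BL_def\<close>)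
  moreover have "(\<Sum>q\<in>trajs T. ?B q * 0 + ?B q - ?s q * exp 0) = 0"
    using Bf(2) cond_rho_sum[OF v, of "[]" T] by (simp add: sum_subtractf rho_def)
  moreover have "(\<Sum>q\<in>trajs T. if ?B q = 0 then 0 else ?B q * ln (?B q / ?s q))
      = (\<Sum>q\<in>trajs T. ?B q * (r x q / \<beta> - ln ?Z))"
  proof (rule sum.cong[OF refl])
    fix q :: "'v list" assume q: "q \<in> trajs T"
    show "(if ?B q = 0 then 0 else ?B q * ln (?B q / ?s q)) = ?B q * (r x q / \<beta> - ln ?Z)"
    proof (cases "?B q = 0")
      case False
      then have "?s q \<noteq> 0" by (simp add: rho_BL_def)
      then have "?B q / ?s q = exp (r x q / \<beta>) / ?Z" by (simp add: rho_BL_def)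
      then show ?thesis using False Zp by (simp add: ln_div)
    qed simp
  qed
  moreover have "(\<Sum>q\<in>trajs T. ?B q * (r x q / \<beta> - ln ?Z))
      = (\<Sum>q\<in>trajs T. ?B q * r x q) / \<beta> - ln ?Z * (\<Sum>q\<in>trajs T. ?B q)"
    by (simp add: sum_subtractf right_diff_distrib sum_divide_distrib sum_distrib_left mult_ac)
  ultimately have bl: "ln ?Z \<le> expect T ?B (r x) / \<beta>"
    using Bf(2) by (simp add: expect_def)
  from st bl b show ?thesis by (simp add: field_simps)
qed

lemma TQ_bounds:
  fixes bl :: "'p \<Rightarrow> 'v::finite list \<Rightarrow> 'v \<Rightarrow> real"
  assumes v: "valid_policy T bl x" and l: "length p < T"
    and rb: "\<forall>tau\<in>trajs T. 0 \<le> r x tau \<and> r x tau \<le> Rmax"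
  shows "0 \<le> TQ T bl r x p z" "TQ T bl r x p z \<le> Rmax"
proof -
  have mem: "\<And>q. q \<in> trajs (T - length p - 1) \<Longrightarrow> p @ z # q \<in> trajs T"
    using l by (auto simp: trajs_def)
  have nn: "\<And>q. q \<in> trajs (T - length p - 1) \<Longrightarrow> 0 \<le> cond_rho bl x (p @ [z]) q"
    by (rule cond_rho_nonneg[OF v]) (use l in \<open>auto simp: trajs_def\<close>)
  show "0 \<le> TQ T bl r x p z" unfolding TQ_def
    by (rule sum_nonneg) (use nn mem rb in auto)
  have "TQ T bl r x p z \<le> (\<Sum>q\<in>trajs (T - length p - 1). cond_rho bl x (p @ [z]) q * Rmax)"
    unfolding TQ_def by (rule sum_mono, rule mult_left_mono) (use nn mem rb in auto)
  also have "\<dots> = Rmax" using cond_rho_sum[OF v, of "p @ [z]" "T - length p - 1"] l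
    by (simp add: sum_distrib_right[symmetric])
  finally show "TQ T bl r x p z \<le> Rmax" .
qed

lemma alg_le:
  fixes bl :: "'p \<Rightarrow> 'v::finite list \<Rightarrow> 'v \<Rightarrow> real"
  assumes v: "valid_policy T bl x" and l: "length p < T" and a: "\<alpha> > 0"
    and rb: "\<forall>tau\<in>trajs T. 0 \<le> r x tau \<and> r x tau \<le> Rmax"
  shows "pi_alg T bl r \<alpha> x p z \<le> bl x p z * exp (Rmax / \<alpha>)"
proof -
  note tq = TQ_bounds[where r=r and Rmax=Rmax, OF v l rb]
  have nn: "\<And>z. 0 \<le> bl x p z" and s: "(\<Sum>z\<in>UNIV. bl x p z) = 1"
    using v l by (auto simp: valid_policy_def)
  have "(\<Sum>z\<in>UNIV. bl x p z * 1) \<le> NN T bl r \<alpha> x p" unfolding NN_def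
    by (rule sum_mono, rule mult_left_mono) (use tq a nn in auto)
  then have N1: "1 \<le> NN T bl r \<alpha> x p" using s by simp
  have "pi_alg T bl r \<alpha> x p z \<le> bl x p z * exp (TQ T bl r x p z / \<alpha>)"
  proof -
    let ?e = "bl x p z * exp (TQ T bl r x p z / \<alpha>)"
    have e0: "0 \<le> ?e" using nn[of z] by simp
    have "?e * 1 \<le> ?e * NN T bl r \<alpha> x p" by (rule mult_left_mono[OF N1 e0])
    then show ?thesis unfolding pi_alg_NN using N1 by (simp add: divide_le_eq)
  qed
  also have "\<dots> \<le> bl x p z * exp (Rmax / \<alpha>)"
    by (rule mult_left_mono) (use tq a nn in \<open>auto simp: divide_right_mono\<close>)
  finally show ?thesis .
qed

lemma rho_alg_le:
  fixes bl :: "'p \<Rightarrow> 'v::finite list \<Rightarrow> 'v \<Rightarrow> real"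
  assumes v: "valid_policy T bl x" and a: "\<alpha> > 0"
    and rb: "\<forall>tau\<in>trajs T. 0 \<le> r x tau \<and> r x tau \<le> Rmax"
    and q: "q \<in> trajs T"
  shows "rho (pi_alg T bl r \<alpha>) x q \<le> rho bl x q * exp (Rmax / \<alpha>) ^ T"
proof -
  have lq: "length q = T" using q by (simp add: trajs_def)
  have "rho (pi_alg T bl r \<alpha>) x q \<le> (\<Prod>i<length q. bl x (take i q) (q ! i) * exp (Rmax / \<alpha>))"
    unfolding rho_def cond_rho_def
    by (rule prod_mono) (use alg_nonneg[OF v] alg_le[where r=r and Rmax=Rmax, OF v _ a rb] lq in auto)
  also have "\<dots> = rho bl x q * exp (Rmax / \<alpha>) ^ T"
    by (simp add: prod.distrib rho_def cond_rho_def lq)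
  finally show ?thesis .
qed

lemma part2:
  fixes bl sft :: "'p \<Rightarrow> 'v::finite list \<Rightarrow> 'v \<Rightarrow> real"
  assumes v: "valid_policy T bl x" and a: "\<alpha> > 0" and b: "\<beta> > 0"
    and sv: "valid_policy T sft x"
    and bi: "\<forall>tau\<in>trajs T. rho bl x tau = rho_BL T sft r \<beta> x tau"
    and rb: "\<forall>tau\<in>trajs T. 0 \<le> r x tau \<and> r x tau \<le> Rmax"
  shows "KL (trajs T) (rho (pi_alg T bl r \<alpha>) x) (rho sft x) \<le> ereal ((1 / \<beta> + real T / \<alpha>) * Rmax)"
proof -
  define C where "C = (1 / \<beta> + real T / \<alpha>) * Rmax"
  let ?ra = "rho (pi_alg T bl r \<alpha>) x" and ?s = "rho sft x" and ?Z = "Z_BL T sft r \<beta> x"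
  have snn: "\<And>q. q \<in> trajs T \<Longrightarrow> 0 \<le> ?s q" unfolding rho_def
    by (rule cond_rho_nonneg[OF sv]) (simp add: trajs_def)
  have ann: "\<And>q. q \<in> trajs T \<Longrightarrow> 0 \<le> ?ra q" unfolding rho_def
    by (rule cond_rho_nonneg[OF alg_valid[OF v]]) (simp add: trajs_def)
  have as1: "(\<Sum>q\<in>trajs T. ?ra q) = 1" unfolding rho_def
    by (rule cond_rho_sum[OF alg_valid[OF v]]) simp
  have "(\<Sum>q\<in>trajs T. ?s q * 1) \<le> ?Z" unfolding Z_BL_def
    by (rule sum_mono, rule mult_left_mono) (use rb b snn in auto)
  then have Z1: "1 \<le> ?Z" using cond_rho_sum[OF sv, of "[]" T] by (simp add: rho_def)
  have key: "?ra q \<le> ?s q * exp C" if q: "q \<in> trajs T" for q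
  proof -
    have "?ra q \<le> rho bl x q * exp (Rmax / \<alpha>) ^ T" by (rule rho_alg_le[where r=r and Rmax=Rmax, OF v a rb q])
    also have "rho bl x q = ?s q * exp (r x q / \<beta>) / ?Z" using bi q by (simp add: rho_BL_def)
    also have "?s q * exp (r x q / \<beta>) / ?Z \<le> ?s q * exp (Rmax / \<beta>)"
    proof -
      have "exp (r x q / \<beta>) \<le> exp (Rmax / \<beta>)" using rb q b by (simp add: divide_right_mono)
      then have "exp (r x q / \<beta>) / ?Z \<le> exp (Rmax / \<beta>)"
        using Z1 by (smt (verit) divide_le_eq exp_gt_zero mult_le_cancel_left1)
      then have "?s q * (exp (r x q / \<beta>) / ?Z) \<le> ?s q * exp (Rmax / \<beta>)"
        by (rule mult_left_mono) (use snn q in auto)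
      then show ?thesis by simp
    qed
    then have "?s q * exp (r x q / \<beta>) / ?Z * exp (Rmax / \<alpha>) ^ T \<le> ?s q * exp (Rmax / \<beta>) * exp (Rmax / \<alpha>) ^ T"
      by (rule mult_right_mono) simp
    also have "?s q * exp (Rmax / \<beta>) * exp (Rmax / \<alpha>) ^ T = ?s q * exp C"
      unfolding C_def by (simp add: exp_of_nat_mult[symmetric] exp_add[symmetric] algebra_simps)
    finally show ?thesis .
  qed
  have ac: "\<not> (\<exists>q\<in>trajs T. ?ra q \<noteq> 0 \<and> ?s q = 0)"
    using key ann by (metis antisym mult_zero_left)
  have "(\<Sum>q\<in>trajs T. if ?ra q = 0 then 0 else ?ra q * ln (?ra q / ?s q)) \<le> (\<Sum>q\<in>trajs T. ?ra q * C)"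
  proof (rule sum_mono)
    fix q :: "'v list" assume q: "q \<in> trajs T"
    show "(if ?ra q = 0 then 0 else ?ra q * ln (?ra q / ?s q)) \<le> ?ra q * C"
    proof (cases "?ra q = 0")
      case False
      then have rp: "0 < ?ra q" using ann[OF q] by simp
      then have sp: "0 < ?s q" using key[OF q] snn[OF q]
        by (metis antisym_conv2 mult_zero_left not_less)
      have "?ra q / ?s q \<le> exp C" using key[OF q] sp by (simp add: divide_le_eq mult.commute)
      then have "ln (?ra q / ?s q) \<le> C" using rp sp
        by (metis divide_pos_pos exp_gt_zero ln_exp ln_le_cancel_iff)
      then show ?thesis using False rp by simp
    qed simp
  qed
  also have "\<dots> = C" using as1 by (simp add: sum_distrib_right[symmetric])
  finally show ?thesis unfolding KL_def C_def[symmetric] using ac by simp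
qed

theorem theorem1:
  fixes T :: nat and x :: 'p
    and r :: "'p \<Rightarrow> 'v::finite list \<Rightarrow> real"
    and pi_sft pi_bl :: "'p \<Rightarrow> 'v list \<Rightarrow> 'v \<Rightarrow> real"
    and \<beta> \<alpha> :: real
    and rho_star :: "'v list \<Rightarrow> real"
  assumes beta_pos: "\<beta> > 0" and alpha_pos: "\<alpha> > 0"
    and sft: "valid_policy T pi_sft x"
    and bl: "valid_policy T pi_bl x"
    and bl_induces: "\<forall>tau\<in>trajs T. rho pi_bl x tau = rho_BL T pi_sft r \<beta> x tau"
    and star_dist: "traj_dist T rho_star"
    and star_max: "\<forall>q. traj_dist T q \<longrightarrow> expect T q (r x) \<le> expect T rho_star (r x)"
  shows "ereal (expect T rho_star (r x) - expect T (rho (pi_alg T pi_bl r \<alpha>) x) (r x))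
           \<le> ereal \<beta> * KL (trajs T) rho_star (rho pi_sft x) - ereal \<alpha> * h_alpha T pi_bl r \<alpha> x
       \<and> h_alpha T pi_bl r \<alpha> x \<ge> 0
       \<and> (\<forall>Rmax. (\<forall>tau\<in>trajs T. 0 \<le> r x tau \<and> r x tau \<le> Rmax) \<longrightarrow>
            KL (trajs T) (rho (pi_alg T pi_bl r \<alpha>) x) (rho pi_sft x)
              \<le> ereal ((1 / \<beta> + real T / \<alpha>) * Rmax))"
proof -
  let ?ra = "rho (pi_alg T pi_bl r \<alpha>) x"
  define g where "g t = (\<Sum>p\<in>trajs t. ?ra p * kl T pi_bl r \<alpha> x p)" for t
  define S where "S = (\<Sum>t<T. g t)"
  define hr where "hr = (\<Sum>t\<in>{1..T-1}. g (t - 1))"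
  have gnn: "0 \<le> g t" if "t < T" for t
    unfolding g_def
  proof (rule sum_nonneg, rule mult_nonneg_nonneg)
    fix p :: "'v list" assume p: "p \<in> trajs t"
    show "0 \<le> ?ra p" unfolding rho_def
      by (rule cond_rho_nonneg[OF alg_valid[OF bl]]) (use p that in \<open>simp add: trajs_def\<close>)
    show "0 \<le> kl T pi_bl r \<alpha> x p" by (rule kl_nonneg[OF bl]) (use p that in \<open>simp add: trajs_def\<close>)
  qed
  have h_eq: "h_alpha T pi_bl r \<alpha> x = ereal hr"
    unfolding h_alpha_def hr_def g_def by (simp add: KL_alg)
  have hr_eq: "hr = (\<Sum>t<T-1. g t)"
  proof -
    have "{1..T-1} = Suc ` {..<T-1}" by (simp add: image_Suc_lessThan)
    then show ?thesis unfolding hr_def by (simp add: sum.reindex)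
  qed
  have hr_le: "hr \<le> S" unfolding hr_eq S_def
    by (rule sum_mono2) (auto intro: gnn)
  have hr_nn: "0 \<le> hr" unfolding hr_eq by (rule sum_nonneg) (auto intro: gnn)
  have EBL: "expect T (rho pi_bl x) (r x) = expect T (rho_BL T pi_sft r \<beta> x) (r x)"
    unfolding expect_def using bl_induces by simp
  have tele: "\<alpha> * S \<le> expect T ?ra (r x) - expect T (rho_BL T pi_sft r \<beta> x) (r x)"
    using AA_tele[OF bl alpha_pos, of T r] unfolding AA_0 AA_T EBL S_def g_def by simp
  have part1: "ereal (expect T rho_star (r x) - expect T ?ra (r x))
           \<le> ereal \<beta> * KL (trajs T) rho_star (rho pi_sft x) - ereal \<alpha> * h_alpha T pi_bl r \<alpha> x"
  proof (cases "\<exists>a\<in>trajs T. rho_star a \<noteq> 0 \<and> rho pi_sft x a = 0")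
    case True
    then show ?thesis using beta_pos by (simp add: KL_def h_eq)
  next
    case False
    have sb: "expect T rho_star (r x) - expect T (rho_BL T pi_sft r \<beta> x) (r x)
     \<le> \<beta> * (\<Sum>q\<in>trajs T. if rho_star q = 0 then 0 else rho_star q * ln (rho_star q / rho pi_sft x q))"
      by (rule star_bound[OF sft beta_pos star_dist]) (use False in auto)
    have "\<alpha> * hr \<le> \<alpha> * S" using hr_le alpha_pos by simp
    then show ?thesis using False sb tele beta_pos by (simp add: KL_def h_eq)
  qed
  show ?thesis
    using part1 hr_nn h_eq part2[OF bl alpha_pos beta_pos sft bl_induces] by simp
qed

end
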